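(* For $k\in\{1,\dots,N\}$ let $J_k$ denote the transitional index for $k$ gain tickets, i.e. $J_k:=\min\{j\in\{1,\dots,k\}: j\,h^+_{j+1,k}\ge\sum_{j'=1}^{j}h^+_{j',k}\}$ with $h^+_{k+1,k}:=\infty$. Then the sequence $(J_k)_{k=1}^{N}$ is monotonically nondecreasing.
   Context: Fix $N\in\mathbb{N}$. A function $f:[0,1]\to\mathbb{R}$ is inverse S-shaped if it is strictly increasing, continuously differentiable, and there is $x_0\in[0,1]$ such that $f'$ is strictly decreasing on $[0,x_0]$ and strictly increasing on $[x_0,1]$. Let $W^+:[0,1]\to[0,1]$ be inverse S-shaped with $W^+(0)=0$, $W^+(1)=1$. For $k\in\{1,\dots,N\}$ and $j\in\{1,\dots,k\}$ let $h^+_{j,k}:=W^+\!\left(\frac{k-j+1}{N}\right)-W^+\!\left(\frac{k-j}{N}\right)$. *)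

theory Defs
  imports "HOL-Analysis.Analysis"
begin

definition inverse_S_shaped :: "(real \<Rightarrow> real) \<Rightarrow> bool" where
  "inverse_S_shaped f \<longleftrightarrow>
     strict_mono_on {0..1} f \<and>
     (\<exists>f'. (\<forall>x\<in>{0..1}. (f has_real_derivative f' x) (at x within {0..1})) \<and>
           continuous_on {0..1} f' \<and>
           (\<exists>x0\<in>{0..1}. strict_antimono_on {0..x0} f' \<and> strict_mono_on {x0..1} f'))"

definition hplus :: "(real \<Rightarrow> real) \<Rightarrow> nat \<Rightarrow> nat \<Rightarrow> nat \<Rightarrow> real" where
  "hplus W N j k = W ((real k - real j + 1) / real N) - W ((real k - real j) / real N)"

text \<open>Transitional index J_k, with the convention h^+_{k+1,k} = \<infinity> (so j = k always qualifies).\<close>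
definition transJ :: "(real \<Rightarrow> real) \<Rightarrow> nat \<Rightarrow> nat \<Rightarrow> nat" where
  "transJ W N k = (LEAST j. 1 \<le> j \<and> j \<le> k \<and>
      (j = k \<or> real j * hplus W N (j+1) k \<ge> (\<Sum>j'=1..j. hplus W N j' k)))"

end

theory Submission
  imports Defs
begin

lemma sign_lemma:
  fixes f' :: "real \<Rightarrow> real"
  assumes h: "h > 0"
    and x0: "x0 \<in> {0..1}" "strict_antimono_on {0..x0} f'" "strict_mono_on {x0..1} f'"
    and ts: "0 \<le> t" "t < s" "s + h \<le> 1"
    and ge: "f' (t+h) - f' t \<ge> 0"
  shows "f' (s+h) - f' s > 0"
proof (cases "s \<ge> x0")
  case True
  then show ?thesis using x0(3) ts h
    by (auto simp: monotone_on_def)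
next
  case False
  have tx: "t + h > x0"
  proof (rule ccontr)
    assume "\<not> t + h > x0"
    then have "f' (t+h) < f' t" using x0(2) ts h
      by (auto simp: monotone_on_def)
    then show False using ge by simp
  qed
  have a: "f' (s+h) > f' (t+h)" using x0(3) ts h tx x0(1)
    by (auto simp: monotone_on_def)
  have b: "f' t > f' s" using x0(2) ts False
    by (auto simp: monotone_on_def)
  show ?thesis using a b ge by simp
qed

lemma qc_cont:
  fixes W f' :: "real \<Rightarrow> real"
  assumes h: "h > 0"
    and der: "\<forall>x\<in>{0..1}. (W has_real_derivative f' x) (at x within {0..1})"
    and x0: "x0 \<in> {0..1}" "strict_antimono_on {0..x0} f'" "strict_mono_on {x0..1} f'"
    and t: "0 \<le> t1" "t1 < t2" "t2 < t3" "t3 + h \<le> 1"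
  shows "W (t2+h) - W t2 < max (W (t1+h) - W t1) (W (t3+h) - W t3)"
proof -
  define g where "g t = W (t+h) - W t" for t
  have Wd: "(W has_real_derivative f' x) (at x)" if "0 < x" "x < 1" for x
  proof -
    have "(W has_real_derivative f' x) (at x within {0..1})" using der that by auto
    moreover have "at x within {0..1} = at x"
      by (rule at_within_interior) (use that in auto)
    ultimately show ?thesis by simp
  qed
  have gd: "(g has_real_derivative (f' (t+h) - f' t)) (at t)" if "0 < t" "t + h < 1" for t
  proof -
    have "(W has_real_derivative f' (t+h)) (at (t+h))" using Wd that h by auto
    then have 1: "((\<lambda>t. W (t+h)) has_real_derivative f' (t+h)) (at t)"
      by (simp add: DERIV_shift)
    have 2: "(W has_real_derivative f' t) (at t)" using Wd that h by auto
    show ?thesis unfolding g_def using DERIV_diff[OF 1 2] by simp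
  qed
  have Wc: "continuous_on {0..1} W"
    by (rule DERIV_continuous_on) (use der in auto)
  have gc: "continuous_on {a..b} g" if "0 \<le> a" "b + h \<le> 1" for a b
  proof -
    have "continuous_on {a..b} (\<lambda>t. W (t+h))"
      apply (rule continuous_on_compose2[OF Wc, of _ "\<lambda>t. t+h"])
      using that h by (auto intro!: continuous_intros)
    moreover have "continuous_on {a..b} W"
      by (rule continuous_on_subset[OF Wc]) (use that h in auto)
    ultimately show ?thesis unfolding g_def by (intro continuous_intros)
  qed
  show ?thesis
  proof (rule ccontr)
    assume "\<not> ?thesis"
    then have c1: "g t1 \<le> g t2" and c2: "g t3 \<le> g t2" unfolding g_def by auto
    obtain l1 z1 where z1: "t1 < z1" "z1 < t2" "DERIV g z1 :> l1" "g t2 - g t1 = (t2 - t1) * l1"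
    proof -
      have "g differentiable (at x)" if "t1 < x" "x < t2" for x
        using gd[of x] that t unfolding real_differentiable_def by auto
      then show ?thesis using MVT[OF t(2) gc[of t1 t2]] t that by auto
    qed
    obtain l2 z2 where z2: "t2 < z2" "z2 < t3" "DERIV g z2 :> l2" "g t3 - g t2 = (t3 - t2) * l2"
    proof -
      have "g differentiable (at x)" if "t2 < x" "x < t3" for x
        using gd[of x] that t unfolding real_differentiable_def by auto
      then show ?thesis using MVT[OF t(3) gc[of t2 t3]] t that by auto
    qed
    have "l1 = f' (z1+h) - f' z1"
      using DERIV_unique[OF z1(3) gd[of z1]] z1 t by auto
    moreover have "l1 \<ge> 0" using z1(4) c1 t
      by (metis diff_ge_0_iff_ge zero_le_mult_iff diff_gt_0_iff_gt linorder_not_le less_le)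
    ultimately have "f' (z1+h) - f' z1 \<ge> 0" by simp
    then have "f' (z2+h) - f' z2 > 0"
      using sign_lemma[OF h x0, of z1 z2] z1 z2 t by auto
    moreover have "l2 = f' (z2+h) - f' z2"
      using DERIV_unique[OF z2(3) gd[of z2]] z2 t by auto
    moreover have "l2 \<le> 0" using z2(4) c2 t
      by (metis diff_le_0_iff_le mult_le_0_iff diff_gt_0_iff_gt linorder_not_le less_le)
    ultimately show False by simp
  qed
qed

lemma sum_shift1:
  fixes a :: "nat \<Rightarrow> real"
  shows "(\<Sum>p=1..j. a (p+1)) + a 1 = (\<Sum>p=1..j. a p) + a (j+1)"
  by (induction j) auto

lemma comb:
  fixes a :: "nat \<Rightarrow> real" and K :: nat
  assumes K: "K \<ge> 2"
    and qc: "\<And>p q r. 1 \<le> p \<Longrightarrow> p < q \<Longrightarrow> q < r \<Longrightarrow> r \<le> K \<Longrightarrow> a q < max (a p) (a r)"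
  shows "(LEAST j. 1 \<le> j \<and> j \<le> K-1 \<and> (j = K-1 \<or> real j * a (j+2) \<ge> (\<Sum>j'=1..j. a (j'+1))))
       \<le> (LEAST j. 1 \<le> j \<and> j \<le> K \<and> (j = K \<or> real j * a (j+1) \<ge> (\<Sum>j'=1..j. a j')))"
    (is "Least ?Q \<le> Least ?P")
proof -
  define j where "j = Least ?P"
  have PK: "?P K" using K by auto
  have Pj: "?P j" unfolding j_def by (rule LeastI[of ?P, OF PK])
  show ?thesis
  proof (cases "j \<ge> K - 1")
    case True
    have "Least ?Q \<le> K - 1" by (rule Least_le) (use K in auto)
    then show ?thesis using True unfolding j_def by simp
  next
    case False
    then have j1: "1 \<le> j" and jK: "j + 2 \<le> K" and C: "real j * a (j+1) \<ge> (\<Sum>j'=1..j. a j')"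
      using Pj by auto
    have s1: "a j \<le> a (j+1)"
    proof (rule ccontr)
      assume ne: "\<not> a j \<le> a (j+1)"
      have "a p \<ge> a j" if "p \<in> {1..j}" for p
      proof (cases "p = j")
        case False
        then have "a j < max (a p) (a (j+1))" using qc[of p j "j+1"] that jK by auto
        then show ?thesis using ne by (auto simp: max_def split: if_splits)
      qed simp
      then have "(\<Sum>j'=1..j. a j') \<ge> (\<Sum>j'=1..j. a j)" by (intro sum_mono) auto
      then have "(\<Sum>j'=1..j. a j') \<ge> real j * a j" by simp
      moreover have "real j * a j > real j * a (j+1)" using ne j1 by simp
      ultimately show False using C by simp
    qed
    have s2: "a (j+1) \<le> a (j+2)"
      using qc[of j "j+1" "j+2"] j1 jK s1 by (auto simp: max_def split: if_splits)
    have s3: "(\<Sum>p=1..j. a (p+1)) \<le> real j * a (j+1)"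
    proof (cases "a 1 \<le> a (j+1)")
      case True
      have "a (p+1) \<le> a (j+1)" if "p \<in> {1..j}" for p
      proof (cases "p = j")
        case False
        then have "a (p+1) < max (a 1) (a (j+1))" using qc[of 1 "p+1" "j+1"] that jK by auto
        then show ?thesis using True by (auto simp: max_def split: if_splits)
      qed simp
      then have "(\<Sum>p=1..j. a (p+1)) \<le> of_nat (card {1..j}) * a (j+1)"
        by (intro sum_bounded_above) auto
      then show ?thesis by simp
    next
      case False
      then show ?thesis using sum_shift1[of a j] C by simp
    qed
    have "real j * a (j+1) \<le> real j * a (j+2)" using s2 by (simp add: mult_left_mono)
    then have "real j * a (j+2) \<ge> (\<Sum>p=1..j. a (p+1))" using s3 by linarith
    then have "?Q j" using j1 jK by auto
    then have "Least ?Q \<le> j" by (rule Least_le)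
    then show ?thesis unfolding j_def by simp
  qed
qed

theorem lemma4:
  fixes W :: "real \<Rightarrow> real" and N :: nat
  assumes "N \<ge> 1"
    and "inverse_S_shaped W" and "W 0 = 0" and "W 1 = 1"
  shows "\<forall>k1 k2. 1 \<le> k1 \<and> k1 \<le> k2 \<and> k2 \<le> N \<longrightarrow> transJ W N k1 \<le> transJ W N k2"
proof -
  obtain f' x0 where der: "\<forall>x\<in>{0..1}. (W has_real_derivative f' x) (at x within {0..1})"
    and x0: "x0 \<in> {0..1}" "strict_antimono_on {0..x0} f'" "strict_mono_on {x0..1} f'"
    using assms(2) unfolding inverse_S_shaped_def by blast
  have Npos: "real N > 0" using assms(1) by simp
  have hp: "1 / real N > 0" using Npos by simp
  have shift: "hplus W N (p+1) (k+1) = hplus W N p k" for p k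
    unfolding hplus_def by simp
  have stepJ: "transJ W N k \<le> transJ W N (Suc k)" if k1: "1 \<le> k" and kN: "Suc k \<le> N" for k
  proof -
    define a where "a p = hplus W N p (k+1)" for p
    have qc: "a q < max (a p) (a r)" if "1 \<le> p" "p < q" "q < r" "r \<le> k+1" for p q r
    proof -
      define t where "t i = (real (k+1) - real i) / real N" for i
      have e: "(real (k+1) - real i + 1) / real N = t i + 1 / real N" for i
        unfolding t_def by (rule add_divide_distrib)
      have ai: "a i = W (t i + 1 / real N) - W (t i)" for i
        unfolding a_def hplus_def e by (simp add: t_def)
      have "t r \<ge> 0" unfolding t_def using that Npos by simp
      moreover have "t r < t q" unfolding t_def using that Npos by (simp add: divide_strict_right_mono)
      moreover have "t q < t p" unfolding t_def using that Npos by (simp add: divide_strict_right_mono)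
      moreover have "t p + 1 / real N \<le> 1"
      proof -
        have "t p + 1 / real N = (real (k+1) - real p + 1) / real N"
          using e[of p] by simp
        also have "\<dots> \<le> 1" using that kN Npos by (simp add: divide_le_eq_1)
        finally show ?thesis .
      qed
      ultimately have "a q < max (a r) (a p)"
        unfolding ai by (rule qc_cont[OF hp der x0])
      then show ?thesis by (simp add: max.commute)
    qed
    have "transJ W N k = (LEAST j. 1 \<le> j \<and> j \<le> (k+1)-1 \<and> (j = (k+1)-1 \<or> real j * a (j+2) \<ge> (\<Sum>j'=1..j. a (j'+1))))"
      unfolding transJ_def a_def by (simp add: shift[simplified])
    also have "\<dots> \<le> (LEAST j. 1 \<le> j \<and> j \<le> k+1 \<and> (j = k+1 \<or> real j * a (j+1) \<ge> (\<Sum>j'=1..j. a j')))"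
      by (rule comb) (use k1 qc in auto)
    also have "\<dots> = transJ W N (Suc k)"
      unfolding transJ_def a_def by simp
    finally show ?thesis .
  qed
  show ?thesis
  proof (intro allI impI)
    fix k1 k2 :: nat
    assume h: "1 \<le> k1 \<and> k1 \<le> k2 \<and> k2 \<le> N"
    then have "k1 \<le> k2" "k2 \<le> N" "1 \<le> k1" by auto
    then show "transJ W N k1 \<le> transJ W N k2"
    proof (induction k2 rule: dec_induct)
      case base
      then show ?case by simp
    next
      case (step k)
      then show ?case using stepJ[of k] by simp
    qed
  qed
qed

end
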